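(* Let $\Bbbk$ be a field, $R=\Bbbk[x_1,\dots,x_m]$ with the standard $\mathbb Z^m$-grading, $P$ a finite poset, and $\deg\colon P\to\mathbb N^m$ a morphism of posets. Let $\widehat{\mathcal F}_\bullet$ be the homogenization of $\mathcal C_\bullet(P,\Bbbk)$ with respect to $\deg$, and let $I\subseteq R$ be the monomial ideal generated by $x^{\deg a}$ for $a$ minimal in $P$. Then $\widehat{\mathcal F}_\bullet$, augmented by the map $\widehat F_0\to I$ sending $[a]\otimes 1\mapsto x^{\deg a}$ for each minimal $a\in P$, is a free resolution of $I$ if and only if the augmented conic chain complex $\widetilde{\mathcal C}_\bullet(P_{\deg\le\alpha},\Bbbk)$ is exact for every $\alpha\in\mathbb Z^m$ such that $P_{\deg\le\alpha}$ is nonempty.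
   Context: For a finite poset $P$ and $a\in P$: $P_{\le a}=\{x: x\le a\}$, $P_{<a}=\{x:x<a\}$, $\Delta(S)$ the order complex, $d(a)=\dim\Delta(P_{\le a})$, $P^n=\{a: d(a)\le n\}$, $\Delta^n=\Delta(P^n)$ ($\Delta^{-1}=\emptyset$), faces oriented by decreasing order of vertices. Conic chain complex: $\mathcal C_n(P,\Bbbk)=H_n(\Delta^n,\Delta^{n-1};\Bbbk)=\bigoplus_{d(a)=n}H_n(\Delta(P_{\le a}),\Delta(P_{<a});\Bbbk)$ for $n\ge0$, with differential $\partial_n=\iota_{n-1}\circ\delta_n$ ($\delta_n$ the connecting map of the pair $(\Delta^n,\Delta^{n-1})$, $\iota_{n-1}\colon\widetilde H_{n-1}(\Delta^{n-1})\to H_{n-1}(\Delta^{n-1},\Delta^{n-2})$ the natural map). Note $\mathcal C_0(P,\Bbbk)=\bigoplus_{a\in P^0}\Bbbk[a]$ where $P^0$ is the set of minimal elements. The augmented conic chain complex $\widetilde{\mathcal C}_\bullet(P,\Bbbk)$ adds $\mathcal C_{-1}=\Bbbk\cdot[\,]$ (the empty face) and $\partial_0([a])=[\,]$. $\mathcal C_\bullet(P,\Bbbk)$ is $P$-graded: $F_{n,a}=H_{n}(\Delta(P_{\le a}),\Delta(P_{<a});\Bbbk)$ if $n=d(a)$ and $0$ otherwise; for $x\in F_{n,a}$ write $f_n^b(x)$ for the component of $\partial_n(x)$ in $F_{n-1,b}$ (nonzero only if $b\le a$). The homogenization with respect to $\deg$ is the complex of $\mathbb Z^m$-graded $R$-modules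 with $\widehat F_n=\bigoplus_{a\in P}F_{n,a}\otimes_\Bbbk R(-\deg a)$ and $\hat f_n(x\otimes1)=\sum_{b\le a}f_n^b(x)\otimes x^{\deg a-\deg b}$ for $x\in F_{n,a}$. For $\alpha\in\mathbb Z^m$, $P_{\deg\le\alpha}=\{x\in P:\deg x\le\alpha\}$ (componentwise order) with the induced order. *)

theory Defs
  imports Main "HOL-Library.Poly_Mapping"
begin

text \<open>Faces of the order complex: nonempty chains, listed in decreasing order
  (this fixes the orientation). The first element (hd) is the top of the chain.\<close>
definition ochains :: "'a::order set \<Rightarrow> 'a list set" where
  "ochains S = {xs. xs \<noteq> [] \<and> set xs \<subseteq> S \<and> sorted_wrt (>) xs}"

text \<open>d(a) = dim Delta(S_{\<le>a}).\<close>
definition dd :: "'a::order set \<Rightarrow> 'a \<Rightarrow> nat" where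
  "dd S a = Max (length ` ochains {x \<in> S. x \<le> a}) - 1"

text \<open>n-faces of Delta^n not in Delta^{n-1}: n-simplices whose top a has d(a) = n.\<close>
definition cells :: "'a::order set \<Rightarrow> nat \<Rightarrow> 'a list set" where
  "cells S n = {xs \<in> ochains S. length xs = Suc n \<and> dd S (hd xs) = n}"

definition remove_nth :: "nat \<Rightarrow> 'a list \<Rightarrow> 'a list" where
  "remove_nth i xs = take i xs @ drop (Suc i) xs"

definition bdryw :: "('a list \<Rightarrow> 'a list \<Rightarrow> 'r::comm_ring_1) \<Rightarrow> 'a list set
    \<Rightarrow> ('a list \<Rightarrow> 'r) \<Rightarrow> 'a list \<Rightarrow> 'r" where
  "bdryw w X c \<tau> = (\<Sum>\<sigma>\<in>X. \<Sum>i<length \<sigma>.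
      if remove_nth i \<sigma> = \<tau> then (-1) ^ i * w \<sigma> \<tau> * c \<sigma> else 0)"

text \<open>Conic chains in degree n with coefficients in K \<subseteq> 'r:
  H_n(Delta^n, Delta^{n-1}) realised as relative cycles (Delta^n has no (n+1)-faces),
  i.e. chains supported on cells S n whose boundary has no face with top of d = n.
  For K a ring R over the field, this is the tensor product C_n \<otimes> R.\<close>
definition CC :: "'a::order set \<Rightarrow> 'r::comm_ring_1 set \<Rightarrow> nat \<Rightarrow> ('a list \<Rightarrow> 'r) set" where
  "CC S K n = {c. (\<forall>\<sigma>. c \<sigma> \<noteq> 0 \<longrightarrow> \<sigma> \<in> cells S n) \<and> (\<forall>\<sigma>. c \<sigma> \<in> K) \<and>
      (\<forall>\<tau>. \<tau> \<in> ochains S \<and> length \<tau> = n \<and> dd S (hd \<tau>) = n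
              \<longrightarrow> bdryw (\<lambda>_ _. 1) (cells S n) c \<tau> = 0)}"

text \<open>Differential in degree n \<ge> 1 (connecting map followed by the natural map, i.e.
  boundary followed by projection modulo Delta^{n-2}), with weights w.\<close>
definition diffw :: "('a list \<Rightarrow> 'a list \<Rightarrow> 'r::comm_ring_1) \<Rightarrow> 'a::order set \<Rightarrow> nat
    \<Rightarrow> ('a list \<Rightarrow> 'r) \<Rightarrow> 'a list \<Rightarrow> 'r" where
  "diffw w S n c = (\<lambda>\<tau>. if \<tau> \<in> cells S (n - 1) then bdryw w (cells S n) c \<tau> else 0)"

definition aug_conic_exact :: "'a::order set \<Rightarrow> 'k::field itself \<Rightarrow> bool" where
  "aug_conic_exact S _ \<longleftrightarrow>
     (\<forall>n\<ge>1. {z \<in> CC S (UNIV::'k set) n. diffw (\<lambda>_ _. 1) S n z = (\<lambda>_. 0)}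
              = diffw (\<lambda>_ _. 1) S (Suc n) ` CC S UNIV (Suc n)) \<and>
     {z \<in> CC S (UNIV::'k set) 0. (\<Sum>\<sigma>\<in>cells S 0. z \<sigma>) = 0}
              = diffw (\<lambda>_ _. 1) S 1 ` CC S UNIV 1 \<and>
     (\<lambda>z. \<Sum>\<sigma>\<in>cells S 0. z \<sigma>) ` CC S (UNIV::'k set) 0 = UNIV"

section \<open>Polynomial ring k[x_1,...,x_m] (variables indexed 0..m-1)\<close>

type_synonym 'k mpoly = "(nat \<Rightarrow>\<^sub>0 nat) \<Rightarrow>\<^sub>0 'k"

definition polyR :: "nat \<Rightarrow> 'k::field mpoly set" where
  "polyR m = {p. \<forall>\<mu>\<in>Poly_Mapping.keys p. Poly_Mapping.keys \<mu> \<subseteq> {..<m}}"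

definition xmono :: "nat \<Rightarrow> (nat \<Rightarrow> nat) \<Rightarrow> 'k::field mpoly" where
  "xmono m \<beta> = Poly_Mapping.single (Abs_poly_mapping (\<lambda>i. if i < m then \<beta> i else 0)) 1"

definition hweight :: "nat \<Rightarrow> ('a \<Rightarrow> nat \<Rightarrow> nat) \<Rightarrow> 'a list \<Rightarrow> 'a list \<Rightarrow> 'k::field mpoly" where
  "hweight m deg \<sigma> \<tau> = xmono m (\<lambda>i. deg (hd \<sigma>) i - deg (hd \<tau>) i)"

definition minimals :: "'a::order set \<Rightarrow> 'a set" where
  "minimals P = {a \<in> P. \<forall>x\<in>P. \<not> x < a}"

definition mon_ideal :: "nat \<Rightarrow> 'a::order set \<Rightarrow> ('a \<Rightarrow> nat \<Rightarrow> nat) \<Rightarrow> 'k::field mpoly set" where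
  "mon_ideal m P deg = {(\<Sum>a\<in>minimals P. r a * xmono m (deg a)) | r. \<forall>a. r a \<in> polyR m}"

definition haug :: "nat \<Rightarrow> 'a::order set \<Rightarrow> ('a \<Rightarrow> nat \<Rightarrow> nat) \<Rightarrow> ('a list \<Rightarrow> 'k::field mpoly) \<Rightarrow> 'k mpoly" where
  "haug m P deg z = (\<Sum>\<sigma>\<in>cells P 0. z \<sigma> * xmono m (deg (hd \<sigma>)))"

definition homog_resolution :: "nat \<Rightarrow> 'a::order set \<Rightarrow> ('a \<Rightarrow> nat \<Rightarrow> nat) \<Rightarrow> 'k::field itself \<Rightarrow> bool" where
  "homog_resolution m P deg _ \<longleftrightarrow>
     (\<forall>n\<ge>1. {z \<in> CC P (polyR m :: 'k mpoly set) n. diffw (hweight m deg) P n z = (\<lambda>_. 0)}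
              = diffw (hweight m deg) P (Suc n) ` CC P (polyR m) (Suc n)) \<and>
     {z \<in> CC P (polyR m :: 'k mpoly set) 0. haug m P deg z = 0}
              = diffw (hweight m deg) P 1 ` CC P (polyR m) 1 \<and>
     haug m P deg ` CC P (polyR m :: 'k mpoly set) 0 = mon_ideal m P deg"

end

theory Submission imports Defs "HOL-Library.Function_Algebras" begin

abbreviation "lk \<equiv> Poly_Mapping.lookup"
abbreviation "sg \<equiv> Poly_Mapping.single"

section \<open>Polynomial facts\<close>

lemma lookup_single_mult_add:
  fixes e \<nu> :: "nat \<Rightarrow>\<^sub>0 nat" and p :: "(nat \<Rightarrow>\<^sub>0 nat) \<Rightarrow>\<^sub>0 'k::field"
  shows "lk (sg e c * p) (e + \<nu>) = c * lk p \<nu>"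
proof -
  have "lk (sg e c * p) (e + \<nu>) = (\<Sum>l. (c when e = l) * (\<Sum>q. lk p q when e + \<nu> = l + q))"
    by (simp add: lookup_mult lookup_single)
  also have "\<dots> = c * (\<Sum>q. lk p q when e + \<nu> = e + q)"
    by (simp add: when_mult)
  also have "\<dots> = c * lk p \<nu>" by simp
  finally show ?thesis .
qed

lemma lookup_single_mult_not:
  fixes e \<mu> :: "nat \<Rightarrow>\<^sub>0 nat" and p :: "(nat \<Rightarrow>\<^sub>0 nat) \<Rightarrow>\<^sub>0 'k::field"
  assumes "\<forall>\<nu>. \<mu> \<noteq> e + \<nu>"
  shows "lk (sg e c * p) \<mu> = 0"
proof -
  have "lk (sg e c * p) \<mu> = (\<Sum>l. (c when e = l) * (\<Sum>q. lk p q when \<mu> = l + q))"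
    by (simp add: lookup_mult lookup_single)
  also have "\<dots> = c * (\<Sum>q. lk p q when \<mu> = e + q)"
    by (simp add: when_mult)
  also have "\<dots> = 0" using assms by simp
  finally show ?thesis .
qed

definition EE :: "nat \<Rightarrow> (nat \<Rightarrow> nat) \<Rightarrow> (nat \<Rightarrow>\<^sub>0 nat)" where
  "EE m f = Abs_poly_mapping (\<lambda>i. if i < m then f i else 0)"

lemma lookup_EE: "lk (EE m f) i = (if i < m then f i else 0)"
proof -
  have "finite {i. (if i < m then f i else 0) \<noteq> 0}"
    by (rule finite_subset[of _ "{..<m}"]) auto
  then show ?thesis unfolding EE_def by simp
qed

lemma EE_add: "EE m f + EE m g = EE m (\<lambda>i. f i + g i)"
  by (rule poly_mapping_eqI) (simp add: lookup_add lookup_EE)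

lemma EE_eq: "EE m f = EE m g \<longleftrightarrow> (\<forall>i<m. f i = g i)"
proof
  assume "EE m f = EE m g"
  then show "\<forall>i<m. f i = g i" by (metis lookup_EE)
next
  assume "\<forall>i<m. f i = g i"
  then show "EE m f = EE m g" by (intro poly_mapping_eqI) (simp add: lookup_EE)
qed

lemma EE_zero: "EE m (\<lambda>_. 0) = 0"
  by (rule poly_mapping_eqI) (simp add: lookup_EE)

lemma keys_EE: "Poly_Mapping.keys (EE m f) \<subseteq> {..<m}"
  by (auto simp: in_keys_iff lookup_EE split: if_splits)

lemma EE_lookup: "Poly_Mapping.keys \<mu> \<subseteq> {..<m} \<Longrightarrow> EE m (lk \<mu>) = \<mu>"
  by (rule poly_mapping_eqI) (auto simp: lookup_EE in_keys_iff)

definition leq :: "nat \<Rightarrow> (nat \<Rightarrow> nat) \<Rightarrow> (nat \<Rightarrow> nat) \<Rightarrow> bool" where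
  "leq m f g \<longleftrightarrow> (\<forall>i<m. f i \<le> g i)"

lemma EE_split: "leq m f g \<Longrightarrow> EE m g = EE m f + EE m (\<lambda>i. g i - f i)"
  by (simp add: EE_add EE_eq leq_def)

lemma EE_not_split: "\<not> leq m f g \<Longrightarrow> \<forall>\<nu>. EE m g \<noteq> EE m f + \<nu>"
proof (intro allI notI)
  fix \<nu> assume "\<not> leq m f g" "EE m g = EE m f + \<nu>"
  then obtain i where "i < m" "f i > g i" by (auto simp: leq_def not_le)
  moreover have "lk (EE m g) i = lk (EE m f) i + lk \<nu> i"
    using \<open>EE m g = EE m f + \<nu>\<close> by (simp add: lookup_add)
  ultimately show False by (simp add: lookup_EE)
qed

lemma xmono_EE: "xmono m f = sg (EE m f) 1"
  unfolding xmono_def EE_def by simp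

lemma neg1_pow_mult: "(-1::'r::ring_1)^i * x = (if even i then x else - x)"
  by simp

lemma lookup_neg1_pow: "lk ((-1)^i * (p::'k::field mpoly)) \<mu> = (-1)^i * lk p \<mu>"
  unfolding neg1_pow_mult[of i p] neg1_pow_mult[of i "lk p \<mu>"] by simp

lemma polyR_iff: "p \<in> polyR m \<longleftrightarrow> (\<forall>\<mu>. lk p \<mu> \<noteq> 0 \<longrightarrow> Poly_Mapping.keys \<mu> \<subseteq> {..<m})"
  by (auto simp: polyR_def in_keys_iff)

lemma polyR_zero[simp]: "0 \<in> polyR m" by (simp add: polyR_def)
lemma polyR_add: "p \<in> polyR m \<Longrightarrow> q \<in> polyR m \<Longrightarrow> p + q \<in> polyR m"
  unfolding polyR_iff lookup_add by (metis add.left_neutral add.right_neutral)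
lemma polyR_uminus: "p \<in> polyR m \<Longrightarrow> - p \<in> polyR m"
  by (auto simp: polyR_iff)
lemma polyR_mult:
  assumes p0: "p \<in> polyR m" and q0: "q \<in> polyR m" shows "p * q \<in> polyR m"
  unfolding polyR_def mem_Collect_eq
proof
  have p: "\<forall>\<mu>\<in>Poly_Mapping.keys p. Poly_Mapping.keys \<mu> \<subseteq> {..<m}"
    and q: "\<forall>\<mu>\<in>Poly_Mapping.keys q. Poly_Mapping.keys \<mu> \<subseteq> {..<m}"
    using p0 q0 by (auto simp: polyR_def)
  fix \<mu> assume "\<mu> \<in> Poly_Mapping.keys (p * q)"
  then obtain a b where "\<mu> = a + b" "a \<in> Poly_Mapping.keys p" "b \<in> Poly_Mapping.keys q"
    using keys_mult by blast
  then show "Poly_Mapping.keys \<mu> \<subseteq> {..<m}" using p q keys_add[of a b] by blast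
qed
lemma polyR_sum: "(\<And>x. x \<in> A \<Longrightarrow> f x \<in> polyR m) \<Longrightarrow> sum f A \<in> polyR m"
  by (induction A rule: infinite_finite_induct) (auto intro: polyR_add)
lemma polyR_single: "sg (EE m f) c \<in> polyR m"
  using keys_EE by (auto simp: polyR_def split: if_splits)
lemma polyR_xmono: "xmono m f \<in> polyR m"
  by (simp add: xmono_EE polyR_single)
lemma polyR_neg1: "(-1) ^ i * p \<in> polyR m \<longleftrightarrow> p \<in> polyR m"
  by (auto simp: neg1_pow_mult dest: polyR_uminus)
lemma polyR_one: "1 \<in> polyR m"
  using polyR_single[of m "\<lambda>_. 0" 1] by (simp add: EE_zero)

section \<open>Chains\<close>

lemma ochainsD: "xs \<in> ochains S \<Longrightarrow> xs \<noteq> [] \<and> set xs \<subseteq> S \<and> sorted_wrt (>) xs"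
  by (simp add: ochains_def)

lemma ochains_hd_ge: "xs \<in> ochains S \<Longrightarrow> x \<in> set xs \<Longrightarrow> x \<le> hd xs"
  by (cases xs) (auto simp: ochains_def)

lemma ochains_hd_in: "xs \<in> ochains S \<Longrightarrow> hd xs \<in> S"
  by (cases xs) (auto simp: ochains_def)

lemma remove_nth_0: "remove_nth 0 xs = tl xs"
  by (simp add: remove_nth_def drop_Suc)

lemma remove_nth_Suc: "remove_nth (Suc i) (h # t) = h # remove_nth i t"
  by (simp add: remove_nth_def)

lemma rm_hd:
  assumes "\<sigma> \<in> ochains S" "remove_nth i \<sigma> = \<tau>" "\<tau> \<noteq> []"
  shows "hd \<tau> \<in> set \<sigma> \<and> hd \<tau> \<le> hd \<sigma> \<and> (i = 0 \<longrightarrow> hd \<tau> < hd \<sigma>) \<and> (i \<noteq> 0 \<longrightarrow> hd \<tau> = hd \<sigma>)"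
proof -
  obtain h t where \<sigma>: "\<sigma> = h # t" using assms(1) by (cases \<sigma>) (auto simp: ochains_def)
  have sw: "sorted_wrt (>) (h # t)" using assms(1) \<sigma> by (simp add: ochains_def)
  show ?thesis
  proof (cases i)
    case 0
    then have "\<tau> = t" using assms(2) \<sigma> by (simp add: remove_nth_0)
    then have "hd \<tau> \<in> set t" using assms(3) by simp
    then show ?thesis using sw \<sigma> 0 \<open>\<tau> = t\<close> by auto
  next
    case (Suc j)
    then show ?thesis using assms(2) \<sigma> by (auto simp: remove_nth_Suc)
  qed
qed

lemma sorted_wrt_gt_distinct: "sorted_wrt (>) (xs::'a::order list) \<Longrightarrow> distinct xs"
  by (induction xs) auto

lemma finite_ochains: "finite S \<Longrightarrow> finite (ochains S)"
proof -
  assume "finite S"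
  have "ochains S \<subseteq> {xs. set xs \<subseteq> S \<and> length xs \<le> card S}"
  proof
    fix xs assume "xs \<in> ochains S"
    then have s: "set xs \<subseteq> S" and "distinct xs" using sorted_wrt_gt_distinct by (auto simp: ochains_def)
    then have "length xs = card (set xs)" by (simp add: distinct_card)
    also have "\<dots> \<le> card S" using card_mono[OF \<open>finite S\<close> s] .
    finally show "xs \<in> {xs. set xs \<subseteq> S \<and> length xs \<le> card S}" using s by simp
  qed
  then show ?thesis using finite_lists_length_le[OF \<open>finite S\<close>] finite_subset by blast
qed

lemma finite_cells: "finite S \<Longrightarrow> finite (cells S n)"
  by (rule finite_subset[OF _ finite_ochains]) (auto simp: cells_def)

lemma cells_ochains: "cells S n \<subseteq> ochains S"
  by (auto simp: cells_def)

lemma dd_strict: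
  assumes "finite S" "x \<in> S" "y \<in> S" "x < y"
  shows "dd S x < dd S y"
proof -
  define L where "L a = length ` ochains {z \<in> S. z \<le> a}" for a
  have fin: "finite (L a)" for a
    unfolding L_def by (rule finite_imageI, rule finite_ochains) (use assms(1) in auto)
  have "[x] \<in> ochains {z \<in> S. z \<le> x}" using assms by (simp add: ochains_def)
  then have ne: "L x \<noteq> {}" by (auto simp: L_def)
  obtain xs where xs: "xs \<in> ochains {z \<in> S. z \<le> x}" "length xs = Max (L x)"
    using Max_in[OF fin ne] by (auto simp: L_def)
  have "y # xs \<in> ochains {z \<in> S. z \<le> y}"
    using xs(1) assms by (auto simp: ochains_def intro: le_less_trans)
  then have "Suc (length xs) \<in> L y" unfolding L_def by (rule rev_image_eqI) simp
  then have "Suc (Max (L x)) \<le> Max (L y)" using Max_ge[OF fin] xs(2) by metis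
  moreover have "xs \<noteq> []" using xs(1) by (simp add: ochains_def)
  then have "Max (L x) \<ge> 1" using xs(2) by (cases xs) auto
  ultimately show ?thesis unfolding dd_def L_def[symmetric] by linarith
qed

lemma same_head:
  assumes "finite S" "\<sigma> \<in> cells S n" "remove_nth i \<sigma> = \<tau>" "\<tau> \<noteq> []" "dd S (hd \<tau>) = n"
  shows "hd \<tau> = hd \<sigma>"
proof -
  have \<sigma>: "\<sigma> \<in> ochains S" "dd S (hd \<sigma>) = n" using assms(2) by (auto simp: cells_def)
  note h = rm_hd[OF \<sigma>(1) assms(3,4)]
  show ?thesis
  proof (cases "i = 0")
    case True
    then have "hd \<tau> < hd \<sigma>" using h by simp
    moreover have "hd \<tau> \<in> S" "hd \<sigma> \<in> S" using h ochainsD[OF \<sigma>(1)] ochains_hd_in[OF \<sigma>(1)] by auto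
    ultimately have "dd S (hd \<tau>) < dd S (hd \<sigma>)" using dd_strict[OF assms(1)] by blast
    then show ?thesis using assms(5) \<sigma>(2) by simp
  qed (use h in auto)
qed

definition downcl :: "'a::order set \<Rightarrow> 'a set \<Rightarrow> bool" where
  "downcl Q S \<longleftrightarrow> Q \<subseteq> S \<and> (\<forall>x\<in>Q. \<forall>y\<in>S. y \<le> x \<longrightarrow> y \<in> Q)"

lemma ochains_down: "downcl Q S \<Longrightarrow> ochains Q = {xs \<in> ochains S. hd xs \<in> Q}"
proof safe
  fix xs assume "downcl Q S" "xs \<in> ochains Q"
  then show "xs \<in> ochains S" "hd xs \<in> Q" by (auto simp: ochains_def downcl_def dest: ochains_hd_in)
next
  fix xs assume d: "downcl Q S" "xs \<in> ochains S" "hd xs \<in> Q"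
  then have "set xs \<subseteq> Q" using ochains_hd_ge[OF d(2)] by (auto simp: downcl_def ochains_def)
  then show "xs \<in> ochains Q" using d(2) by (simp add: ochains_def)
qed

lemma dd_down: "downcl Q S \<Longrightarrow> a \<in> Q \<Longrightarrow> dd Q a = dd S a"
proof -
  assume "downcl Q S" "a \<in> Q"
  then have "{x \<in> Q. x \<le> a} = {x \<in> S. x \<le> a}" by (auto simp: downcl_def)
  then show ?thesis by (simp add: dd_def)
qed

lemma cells_down: "downcl Q S \<Longrightarrow> cells Q n = {\<sigma> \<in> cells S n. hd \<sigma> \<in> Q}"
proof -
  assume d: "downcl Q S"
  show ?thesis unfolding cells_def ochains_down[OF d] using dd_down[OF d] by auto
qed

section \<open>Boundary lemmas\<close>

lemma bdryw_subset:
  assumes "finite X" "Y \<subseteq> X" "\<forall>\<sigma>\<in>X - Y. c \<sigma> = 0"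
  shows "bdryw w X c \<tau> = bdryw w Y c \<tau>"
  unfolding bdryw_def using assms by (intro sum.mono_neutral_right) (auto intro!: sum.neutral)

lemma bdryw_cong:
  assumes "\<forall>\<sigma>\<in>X. \<forall>i<length \<sigma>. remove_nth i \<sigma> = \<tau> \<longrightarrow> w \<sigma> \<tau> = w' \<sigma> \<tau> \<and> c \<sigma> = c' \<sigma>"
  shows "bdryw w X c \<tau> = bdryw w' X c' \<tau>"
  unfolding bdryw_def using assms by (intro sum.cong refl) auto

lemma bdryw_zero: "bdryw w X (\<lambda>_. 0) \<tau> = 0"
  unfolding bdryw_def by (intro sum.neutral ballI) simp

lemma bdryw_add: "bdryw w X (\<lambda>\<sigma>. c1 \<sigma> + c2 \<sigma>) \<tau> = bdryw w X c1 \<tau> + bdryw w X c2 \<tau>"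
  unfolding bdryw_def sum.distrib[symmetric] by (intro sum.cong refl) (simp add: algebra_simps)

lemma linear_sum:
  assumes "\<And>a b. L (a + b) = L a + L b" "L 0 = 0"
  shows "L (sum f A) = (\<Sum>x\<in>A. L (f x))"
  by (induction A rule: infinite_finite_induct) (simp_all add: assms)

lemma bdryw_linear:
  fixes L :: "'r::comm_ring_1 \<Rightarrow> 's::comm_ring_1"
  assumes "\<And>a b. L (a + b) = L a + L b" "L 0 = 0" "\<And>a. L (- a) = - L a"
  shows "bdryw (\<lambda>_ _. 1) X (\<lambda>\<sigma>. L (c \<sigma>)) \<tau> = L (bdryw (\<lambda>_ _. 1) X c \<tau>)"
  unfolding bdryw_def linear_sum[of L, OF assms(1,2)]
  by (intro sum.cong refl) (simp add: neg1_pow_mult assms)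

definition tgt :: "'a::order set \<Rightarrow> nat \<Rightarrow> 'a list set" where
  "tgt S n = (if n = 0 then {[]} else cells S (n - 1))"

definition Dg :: "('a list \<Rightarrow> 'a list \<Rightarrow> 'r::comm_ring_1) \<Rightarrow> 'a::order set \<Rightarrow> nat
    \<Rightarrow> ('a list \<Rightarrow> 'r) \<Rightarrow> 'a list \<Rightarrow> 'r" where
  "Dg w S n c = (\<lambda>\<tau>. if \<tau> \<in> tgt S n then bdryw w (cells S n) c \<tau> else 0)"

lemma Dg_zero: "Dg w S n (\<lambda>_. 0) = (\<lambda>_. 0)"
  unfolding Dg_def bdryw_zero by simp

lemma polyR_bdryw:
  assumes "\<forall>\<sigma>. w \<sigma> \<tau> \<in> polyR m" "\<forall>\<sigma>. C \<sigma> \<in> polyR m"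
  shows "bdryw w X C \<tau> \<in> polyR m"
  unfolding bdryw_def
proof (intro polyR_sum)
  fix \<sigma> i assume "\<sigma> \<in> X" "i \<in> {..<length \<sigma>}"
  have "(- 1) ^ i * w \<sigma> \<tau> * C \<sigma> \<in> polyR m"
    unfolding mult.assoc polyR_neg1 using assms by (simp add: polyR_mult)
  then show "(if remove_nth i \<sigma> = \<tau> then (- 1) ^ i * w \<sigma> \<tau> * C \<sigma> else 0) \<in> polyR m" by simp
qed

locale S3 =
  fixes P :: "'a::order set" and m :: nat and deg :: "'a \<Rightarrow> nat \<Rightarrow> nat"
  assumes finP: "finite P"
    and mono: "\<forall>a\<in>P. \<forall>b\<in>P. a \<le> b \<longrightarrow> (\<forall>i<m. deg a i \<le> deg b i)"
begin

definition hdeg :: "'a list \<Rightarrow> nat \<Rightarrow> nat" where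
  "hdeg \<sigma> = (if \<sigma> = [] then (\<lambda>_. 0) else deg (hd \<sigma>))"

definition Qb :: "(nat \<Rightarrow> nat) \<Rightarrow> 'a set" where
  "Qb \<beta> = {x \<in> P. leq m (deg x) \<beta>}"

definition st :: "(nat \<Rightarrow> nat) \<Rightarrow> ('a list \<Rightarrow> 'k::field mpoly) \<Rightarrow> 'a list \<Rightarrow> 'k" where
  "st \<beta> C \<sigma> = (if leq m (hdeg \<sigma>) \<beta> then lk (C \<sigma>) (EE m (\<lambda>i. \<beta> i - hdeg \<sigma> i)) else 0)"

definition lift :: "(nat \<Rightarrow> nat) \<Rightarrow> ('a list \<Rightarrow> 'k::field) \<Rightarrow> 'a list \<Rightarrow> 'k mpoly" where
  "lift \<beta> z \<sigma> = (if leq m (hdeg \<sigma>) \<beta> then sg (EE m (\<lambda>i. \<beta> i - hdeg \<sigma> i)) (z \<sigma>) else 0)"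

definition hw :: "'a list \<Rightarrow> 'a list \<Rightarrow> 'k::field mpoly" where
  "hw \<sigma> \<tau> = xmono m (\<lambda>i. hdeg \<sigma> i - hdeg \<tau> i)"

lemma Qb_down: "downcl (Qb \<beta>) P"
  using mono unfolding downcl_def Qb_def leq_def by (auto; meson le_trans)

lemma Qb_sub: "Qb \<beta> \<subseteq> P" by (auto simp: Qb_def)

lemma hdeg_cons: "\<sigma> \<noteq> [] \<Longrightarrow> hdeg \<sigma> = deg (hd \<sigma>)"
  by (simp add: hdeg_def)

lemma hdeg_mono:
  assumes "\<sigma> \<in> ochains P" "remove_nth i \<sigma> = \<tau>"
  shows "leq m (hdeg \<tau>) (hdeg \<sigma>)"
proof (cases "\<tau> = []")
  case True then show ?thesis by (simp add: hdeg_def leq_def)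
next
  case False
  note h = rm_hd[OF assms False]
  have "hd \<tau> \<in> P" "hd \<sigma> \<in> P" using h ochainsD[OF assms(1)] ochains_hd_in[OF assms(1)] by auto
  then show ?thesis using h mono False ochainsD[OF assms(1)] by (auto simp: hdeg_def leq_def)
qed

lemma st_supp:
  assumes "\<forall>\<sigma>. C \<sigma> \<noteq> 0 \<longrightarrow> \<sigma> \<in> cells P n" "\<sigma> \<notin> cells (Qb \<beta>) n"
  shows "st \<beta> C \<sigma> = 0"
proof (cases "\<sigma> \<in> cells P n")
  case True
  have "hd \<sigma> \<notin> Qb \<beta>" using assms(2) True cells_down[OF Qb_down] by blast
  moreover have "\<sigma> \<in> ochains P" using True cells_ochains by blast
  ultimately have "hd \<sigma> \<notin> Qb \<beta>" "hd \<sigma> \<in> P" "\<sigma> \<noteq> []"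
    using ochains_hd_in ochainsD by blast+
  then show ?thesis by (auto simp: st_def Qb_def hdeg_def)
next
  case False then have "C \<sigma> = 0" using assms(1) by blast
  then show ?thesis by (simp add: st_def)
qed

lemma CL:
  fixes C :: "'a list \<Rightarrow> 'k::field mpoly"
  assumes "X \<subseteq> ochains P" "leq m (hdeg \<tau>) \<beta>"
  shows "lk (bdryw hw X C \<tau>) (EE m (\<lambda>i. \<beta> i - hdeg \<tau> i)) = bdryw (\<lambda>_ _. 1) X (st \<beta> C) \<tau>"
  unfolding bdryw_def lookup_sum
proof (intro sum.cong refl)
  fix \<sigma> i assume \<sigma>: "\<sigma> \<in> X" and i: "i \<in> {..<length \<sigma>}"
  show "lk (if remove_nth i \<sigma> = \<tau> then (- 1) ^ i * hw \<sigma> \<tau> * C \<sigma> else 0) (EE m (\<lambda>i. \<beta> i - hdeg \<tau> i)) =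
       (if remove_nth i \<sigma> = \<tau> then (- 1) ^ i * 1 * st \<beta> C \<sigma> else 0)"
  proof (cases "remove_nth i \<sigma> = \<tau>")
    case True
    have le: "leq m (hdeg \<tau>) (hdeg \<sigma>)" using hdeg_mono \<sigma> assms(1) True by blast
    have "lk (sg (EE m (\<lambda>j. hdeg \<sigma> j - hdeg \<tau> j)) 1 * C \<sigma>) (EE m (\<lambda>i. \<beta> i - hdeg \<tau> i)) = st \<beta> C \<sigma>"
    proof (cases "leq m (hdeg \<sigma>) \<beta>")
      case True
      have "EE m (\<lambda>i. \<beta> i - hdeg \<tau> i) = EE m (\<lambda>j. hdeg \<sigma> j - hdeg \<tau> j) + EE m (\<lambda>i. \<beta> i - hdeg \<sigma> i)"
        using True le by (simp add: EE_add EE_eq leq_def)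
      then show ?thesis using True by (simp add: lookup_single_mult_add st_def)
    next
      case False
      obtain j where j: "j < m" "\<beta> j < hdeg \<sigma> j" using False by (auto simp: leq_def not_le)
      then have "\<not> (hdeg \<sigma> j - hdeg \<tau> j \<le> \<beta> j - hdeg \<tau> j)" using assms(2) by (auto simp: leq_def)
      then have "\<not> leq m (\<lambda>j. hdeg \<sigma> j - hdeg \<tau> j) (\<lambda>i. \<beta> i - hdeg \<tau> i)"
        using j by (auto simp: leq_def)
      then show ?thesis using False EE_not_split by (simp add: lookup_single_mult_not st_def)
    qed
    then show ?thesis using True by (simp add: mult.assoc lookup_neg1_pow hw_def xmono_EE)
  qed simp
qed

lemma xmono_zero: "xmono m (\<lambda>_. 0) = (1::'k::field mpoly)"
  by (simp add: xmono_EE EE_zero)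

lemma bdry_same_head:
  fixes C :: "'a list \<Rightarrow> 'k::field mpoly"
  assumes "\<tau> \<in> ochains P" "dd P (hd \<tau>) = n"
  shows "bdryw (\<lambda>_ _. 1) (cells P n) C \<tau> = bdryw hw (cells P n) C \<tau>"
proof (rule bdryw_cong, intro ballI allI impI)
  fix \<sigma> i assume s: "\<sigma> \<in> cells P n" "i < length \<sigma>" "remove_nth i \<sigma> = \<tau>"
  have ne: "\<tau> \<noteq> []" using assms(1) by (simp add: ochains_def)
  have "hd \<tau> = hd \<sigma>" using same_head[OF finP s(1) s(3) ne assms(2)] .
  moreover have "\<sigma> \<noteq> []" using s(1) by (simp add: cells_def ochains_def)
  ultimately have "hw \<sigma> \<tau> = 1" using ne by (simp add: hw_def hdeg_def xmono_zero)
  then show "1 = hw \<sigma> \<tau> \<and> C \<sigma> = C \<sigma>" by simp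
qed

lemma RC:
  fixes C :: "'a list \<Rightarrow> 'k::field mpoly"
  assumes "\<forall>\<sigma>. C \<sigma> \<noteq> 0 \<longrightarrow> \<sigma> \<in> cells P n" "\<tau> \<in> ochains P" "dd P (hd \<tau>) = n"
    "leq m (deg (hd \<tau>)) \<beta>"
  shows "lk (bdryw (\<lambda>_ _. 1) (cells P n) C \<tau>) (EE m (\<lambda>i. \<beta> i - deg (hd \<tau>) i))
     = bdryw (\<lambda>_ _. 1) (cells (Qb \<beta>) n) (st \<beta> C) \<tau>"
proof -
  have ne: "\<tau> \<noteq> []" using assms(2) by (simp add: ochains_def)
  have "lk (bdryw (\<lambda>_ _. 1) (cells P n) C \<tau>) (EE m (\<lambda>i. \<beta> i - deg (hd \<tau>) i))
     = lk (bdryw hw (cells P n) C \<tau>) (EE m (\<lambda>i. \<beta> i - hdeg \<tau> i))"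
    by (simp only: bdry_same_head[OF assms(2,3)] hdeg_cons[OF ne])
  also have "\<dots> = bdryw (\<lambda>_ _. 1) (cells P n) (st \<beta> C) \<tau>"
  proof -
    have "leq m (hdeg \<tau>) \<beta>" using assms(4) hdeg_cons[OF ne] by simp
    from CL[OF cells_ochains this] show ?thesis by (simp only: hdeg_cons[OF ne])
  qed
  also have "\<dots> = bdryw (\<lambda>_ _. 1) (cells (Qb \<beta>) n) (st \<beta> C) \<tau>"
    using st_supp[OF assms(1)] cells_down[OF Qb_down] finite_cells[OF finP]
    by (intro bdryw_subset) auto
  finally show ?thesis .
qed


lemma tgt_Qb: "tgt (Qb \<beta>) n = {\<tau> \<in> tgt P n. leq m (hdeg \<tau>) \<beta>}"
proof (cases "n = 0")
  case True then show ?thesis by (auto simp: tgt_def hdeg_def leq_def)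
next
  case False
  have "\<sigma> \<in> cells P (n - 1) \<Longrightarrow> hd \<sigma> \<in> Qb \<beta> \<longleftrightarrow> leq m (hdeg \<sigma>) \<beta>" for \<sigma>
    using cells_ochains[of P "n - 1"] ochains_hd_in[of \<sigma> P] ochainsD[of \<sigma> P]
    by (auto simp: Qb_def hdeg_def)
  then show ?thesis using False cells_down[OF Qb_down] by (auto simp: tgt_def)
qed

lemma DA:
  fixes C :: "'a list \<Rightarrow> 'k::field mpoly"
  assumes supp: "\<forall>\<sigma>. C \<sigma> \<noteq> 0 \<longrightarrow> \<sigma> \<in> cells P n"
  shows "st \<beta> (Dg hw P n C) = Dg (\<lambda>_ _. 1) (Qb \<beta>) n (st \<beta> C)"
proof (rule ext)
  fix \<tau>
  show "st \<beta> (Dg hw P n C) \<tau> = Dg (\<lambda>_ _. 1) (Qb \<beta>) n (st \<beta> C) \<tau>"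
  proof (cases "\<tau> \<in> tgt P n \<and> leq m (hdeg \<tau>) \<beta>")
    case True
    then have t: "\<tau> \<in> tgt (Qb \<beta>) n" by (simp add: tgt_Qb)
    have "st \<beta> (Dg hw P n C) \<tau> = lk (bdryw hw (cells P n) C \<tau>) (EE m (\<lambda>i. \<beta> i - hdeg \<tau> i))"
      using True by (simp add: st_def Dg_def)
    also have "\<dots> = bdryw (\<lambda>_ _. 1) (cells P n) (st \<beta> C) \<tau>"
      using CL[OF cells_ochains] True by blast
    also have "\<dots> = bdryw (\<lambda>_ _. 1) (cells (Qb \<beta>) n) (st \<beta> C) \<tau>"
      using st_supp[OF supp] cells_down[OF Qb_down] finite_cells[OF finP]
      by (intro bdryw_subset) auto
    finally show ?thesis using t by (simp add: Dg_def)
  next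
    case False
    then have t: "\<tau> \<notin> tgt (Qb \<beta>) n" by (simp add: tgt_Qb)
    from False show ?thesis
      by (auto simp: st_def Dg_def t)
  qed
qed

lemma CC_supp: "C \<in> CC S K n \<Longrightarrow> \<forall>\<sigma>. C \<sigma> \<noteq> 0 \<longrightarrow> \<sigma> \<in> cells S n"
  by (simp add: CC_def)

lemma CC_Qb_supp: "z \<in> CC (Qb \<beta>) K n \<Longrightarrow> \<forall>\<sigma>. z \<sigma> \<noteq> 0 \<longrightarrow> leq m (hdeg \<sigma>) \<beta>"
proof (intro allI impI)
  fix \<sigma> assume "z \<in> CC (Qb \<beta>) K n" "z \<sigma> \<noteq> 0"
  then have "\<sigma> \<in> cells (Qb \<beta>) n" by (simp add: CC_def)
  then have "\<sigma> \<in> ochains (Qb \<beta>)" using cells_ochains by blast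
  then have "hd \<sigma> \<in> Qb \<beta>" "\<sigma> \<noteq> []" using ochains_hd_in ochainsD by blast+
  then show "leq m (hdeg \<sigma>) \<beta>" by (simp add: Qb_def hdeg_def)
qed

lemma st_CC:
  fixes C :: "'a list \<Rightarrow> 'k::field mpoly"
  assumes "C \<in> CC P (polyR m) n"
  shows "st \<beta> C \<in> CC (Qb \<beta>) UNIV n"
  unfolding CC_def mem_Collect_eq
proof (intro conjI allI impI)
  fix \<sigma> assume "st \<beta> C \<sigma> \<noteq> 0"
  then show "\<sigma> \<in> cells (Qb \<beta>) n" using st_supp[OF CC_supp[OF assms]] by blast
next
  fix \<tau> assume t: "\<tau> \<in> ochains (Qb \<beta>) \<and> length \<tau> = n \<and> dd (Qb \<beta>) (hd \<tau>) = n"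
  then have t1: "\<tau> \<in> ochains P" "hd \<tau> \<in> Qb \<beta>" using ochains_down[OF Qb_down] by auto
  then have t2: "dd P (hd \<tau>) = n" "leq m (deg (hd \<tau>)) \<beta>"
    using t dd_down[OF Qb_down] by (auto simp: Qb_def)
  have "bdryw (\<lambda>_ _. 1) (cells P n) C \<tau> = 0" using assms t t1 t2 by (simp add: CC_def)
  then show "bdryw (\<lambda>_ _. 1) (cells (Qb \<beta>) n) (st \<beta> C) \<tau> = 0"
    using RC[OF CC_supp[OF assms] t1(1) t2] by simp
qed simp

lemma lift_CC:
  fixes z :: "'a list \<Rightarrow> 'k::field"
  assumes z: "z \<in> CC (Qb \<beta>) UNIV n"
  shows "lift \<beta> z \<in> CC P (polyR m) n"
  unfolding CC_def mem_Collect_eq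
proof (intro conjI allI impI)
  fix \<sigma> assume "lift \<beta> z \<sigma> \<noteq> 0"
  moreover have "z \<sigma> = 0 \<Longrightarrow> lift \<beta> z \<sigma> = 0" unfolding lift_def by simp
  ultimately have "z \<sigma> \<noteq> 0" by blast
  then have "\<sigma> \<in> cells (Qb \<beta>) n" using z by (simp add: CC_def)
  then show "\<sigma> \<in> cells P n" using cells_down[OF Qb_down] by blast
next
  fix \<sigma> show "lift \<beta> z \<sigma> \<in> polyR m" by (simp add: lift_def polyR_single)
next
  fix \<tau> assume t: "\<tau> \<in> ochains P \<and> length \<tau> = n \<and> dd P (hd \<tau>) = n"
  have ne: "\<tau> \<noteq> []" using t by (simp add: ochains_def)
  define L where "L c = (if leq m (deg (hd \<tau>)) \<beta> then sg (EE m (\<lambda>i. \<beta> i - deg (hd \<tau>) i)) c else 0)" for c :: 'k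
  have "bdryw (\<lambda>_ _. 1) (cells P n) (lift \<beta> z) \<tau> = bdryw (\<lambda>_ _. 1) (cells P n) (\<lambda>\<sigma>. L (z \<sigma>)) \<tau>"
  proof (rule bdryw_cong, intro ballI allI impI conjI refl)
    fix \<sigma> i assume s: "\<sigma> \<in> cells P n" "i < length \<sigma>" "remove_nth i \<sigma> = \<tau>"
    have "hd \<tau> = hd \<sigma>" using same_head[OF finP s(1) s(3) ne] t by simp
    moreover have "\<sigma> \<noteq> []" using s(1) by (simp add: cells_def ochains_def)
    ultimately show "lift \<beta> z \<sigma> = L (z \<sigma>)" by (simp add: lift_def L_def hdeg_def)
  qed
  also have "\<dots> = L (bdryw (\<lambda>_ _. 1) (cells P n) z \<tau>)"
    by (rule bdryw_linear) (simp_all add: L_def single_add single_uminus)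
  also have "bdryw (\<lambda>_ _. 1) (cells P n) z \<tau> = bdryw (\<lambda>_ _. 1) (cells (Qb \<beta>) n) z \<tau>"
    using z cells_down[OF Qb_down] finite_cells[OF finP]
    by (intro bdryw_subset) (auto simp: CC_def)
  also have "L \<dots> = 0"
  proof (cases "leq m (deg (hd \<tau>)) \<beta>")
    case True
    then have "hd \<tau> \<in> Qb \<beta>" using t ochains_hd_in by (auto simp: Qb_def)
    then have "\<tau> \<in> ochains (Qb \<beta>)" "dd (Qb \<beta>) (hd \<tau>) = n"
      using t ochains_down[OF Qb_down] dd_down[OF Qb_down] by auto
    then have "bdryw (\<lambda>_ _. 1) (cells (Qb \<beta>) n) z \<tau> = 0" using z t by (simp add: CC_def)
    then show ?thesis by (simp add: L_def)
  qed (simp add: L_def)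
  finally show "bdryw (\<lambda>_ _. 1) (cells P n) (lift \<beta> z) \<tau> = 0" .
qed

lemma st_lift:
  fixes z :: "'a list \<Rightarrow> 'k::field"
  assumes "\<forall>\<sigma>. z \<sigma> \<noteq> 0 \<longrightarrow> leq m (hdeg \<sigma>) \<beta>"
  shows "st \<beta>' (lift \<beta> z) = (if (\<forall>i<m. \<beta> i = \<beta>' i) then z else (\<lambda>_. 0))"
proof (rule ext)
  fix \<sigma>
  show "st \<beta>' (lift \<beta> z) \<sigma> = (if (\<forall>i<m. \<beta> i = \<beta>' i) then z else (\<lambda>_. 0)) \<sigma>"
  proof (cases "z \<sigma> = 0")
    case True then show ?thesis by (simp add: st_def lift_def)
  next
    case False
    then have le: "leq m (hdeg \<sigma>) \<beta>" using assms by blast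
    show ?thesis
    proof (cases "\<forall>i<m. \<beta> i = \<beta>' i")
      case True
      then have "leq m (hdeg \<sigma>) \<beta>'" "EE m (\<lambda>i. \<beta> i - hdeg \<sigma> i) = EE m (\<lambda>i. \<beta>' i - hdeg \<sigma> i)"
        using le by (auto simp: leq_def EE_eq)
      then show ?thesis using True le by (simp add: st_def lift_def)
    next
      case False
      then obtain j where j: "j < m" "\<beta> j \<noteq> \<beta>' j" by blast
      show ?thesis
      proof (cases "leq m (hdeg \<sigma>) \<beta>'")
        case True
        have "EE m (\<lambda>i. \<beta> i - hdeg \<sigma> i) \<noteq> EE m (\<lambda>i. \<beta>' i - hdeg \<sigma> i)"
        proof
          assume "EE m (\<lambda>i. \<beta> i - hdeg \<sigma> i) = EE m (\<lambda>i. \<beta>' i - hdeg \<sigma> i)"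
          then have "\<beta> j - hdeg \<sigma> j = \<beta>' j - hdeg \<sigma> j" using j(1) unfolding EE_eq by blast
          moreover have "hdeg \<sigma> j \<le> \<beta> j" "hdeg \<sigma> j \<le> \<beta>' j" using le True j(1) by (auto simp: leq_def)
          ultimately show False using j(2) by arith
        qed
        then show ?thesis using True le False by (auto simp: st_def lift_def lookup_single_not_eq)
      qed (use False in \<open>auto simp: st_def\<close>)
    qed
  qed
qed

lemma chain_eq:
  fixes C C' :: "'a list \<Rightarrow> 'k::field mpoly"
  assumes "\<forall>\<sigma>. C \<sigma> \<in> polyR m" "\<forall>\<sigma>. C' \<sigma> \<in> polyR m" "\<forall>\<beta>. st \<beta> C = st \<beta> C'"
  shows "C = C'"
proof (rule ext, rule poly_mapping_eqI)
  fix \<sigma> \<mu>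
  show "lk (C \<sigma>) \<mu> = lk (C' \<sigma>) \<mu>"
  proof (cases "Poly_Mapping.keys \<mu> \<subseteq> {..<m}")
    case True
    define \<beta> where "\<beta> i = hdeg \<sigma> i + lk \<mu> i" for i
    have le: "leq m (hdeg \<sigma>) \<beta>" by (simp add: leq_def \<beta>_def)
    have e: "EE m (\<lambda>i. \<beta> i - hdeg \<sigma> i) = \<mu>" using EE_lookup[OF True] by (simp add: \<beta>_def)
    have "st \<beta> C \<sigma> = st \<beta> C' \<sigma>" using assms(3) by simp
    then show ?thesis using le e by (simp add: st_def)
  next
    case False
    have "lk (C \<sigma>) \<mu> = 0" using assms(1) False polyR_iff by blast
    moreover have "lk (C' \<sigma>) \<mu> = 0" using assms(2) False polyR_iff by blast
    ultimately show ?thesis by simp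
  qed
qed

lemma st_zero: "st \<beta> (\<lambda>_. 0 :: 'k::field mpoly) = (\<lambda>_. 0)"
  by (simp add: st_def fun_eq_iff)

lemma agree:
  assumes "\<forall>i<m. \<beta> i = \<beta>' i"
  shows "st \<beta> = st \<beta>'" "Qb \<beta> = Qb \<beta>'"
proof -
  have l: "leq m f \<beta> \<longleftrightarrow> leq m f \<beta>'" for f using assms by (simp add: leq_def)
  have e: "EE m (\<lambda>i. \<beta> i - f i) = EE m (\<lambda>i. \<beta>' i - f i)" for f using assms by (simp add: EE_eq)
  show "st \<beta> = st \<beta>'" by (intro ext) (simp add: st_def l e)
  show "Qb \<beta> = Qb \<beta>'" by (simp add: Qb_def l)
qed

lemma Dg_polyR:
  fixes C :: "'a list \<Rightarrow> 'k::field mpoly"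
  assumes "\<forall>\<sigma>. C \<sigma> \<in> polyR m"
  shows "\<forall>\<tau>. Dg hw P n C \<tau> \<in> polyR m"
  using polyR_bdryw[of hw _ m C] assms by (simp add: Dg_def hw_def polyR_xmono)


lemma CC_zero: "0 \<in> K \<Longrightarrow> (\<lambda>_. 0) \<in> CC S K n"
  by (simp add: CC_def bdryw_zero)

lemma CC_add:
  fixes C1 C2 :: "'a list \<Rightarrow> 'k::field mpoly"
  assumes "C1 \<in> CC S (polyR m) n" "C2 \<in> CC S (polyR m) n"
  shows "C1 + C2 \<in> CC S (polyR m) n"
  unfolding CC_def mem_Collect_eq plus_fun_def
proof (intro conjI allI impI)
  fix \<sigma> assume "C1 \<sigma> + C2 \<sigma> \<noteq> 0"
  then have "C1 \<sigma> \<noteq> 0 \<or> C2 \<sigma> \<noteq> 0" by auto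
  then show "\<sigma> \<in> cells S n" using CC_supp[OF assms(1)] CC_supp[OF assms(2)] by blast
next
  fix \<sigma> show "C1 \<sigma> + C2 \<sigma> \<in> polyR m" using assms by (simp add: CC_def polyR_add)
next
  fix \<tau> assume "\<tau> \<in> ochains S \<and> length \<tau> = n \<and> dd S (hd \<tau>) = n"
  then show "bdryw (\<lambda>_ _. 1) (cells S n) (\<lambda>x. C1 x + C2 x) \<tau> = 0"
    using assms by (simp add: CC_def bdryw_add)
qed

lemma CC_sum:
  fixes f :: "'b \<Rightarrow> 'a list \<Rightarrow> 'k::field mpoly"
  assumes "finite B" "\<forall>b\<in>B. f b \<in> CC S (polyR m) n"
  shows "(\<Sum>b\<in>B. f b) \<in> CC S (polyR m) n"
  using assms
proof (induction B rule: finite_induct)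
  case empty then show ?case using CC_zero[of "polyR m"] by (simp add: zero_fun_def)
next
  case (insert x F)
  then have "f x + sum f F \<in> CC S (polyR m) n" by (intro CC_add) auto
  then show ?case by (simp only: sum.insert[OF insert(1,2)])
qed

lemma st_add: "st \<beta> (C1 + C2) = st \<beta> C1 + st \<beta> C2"
  by (rule ext) (simp add: st_def lookup_add)

lemma st_sum:
  fixes f :: "'b \<Rightarrow> 'a list \<Rightarrow> 'k::field mpoly"
  shows "st \<beta> (\<Sum>b\<in>B. f b) = (\<Sum>b\<in>B. st \<beta> (f b))"
proof (induction B rule: infinite_finite_induct)
  case (infinite A) then show ?case by (simp add: zero_fun_def st_zero)
next
  case empty then show ?case by (simp add: zero_fun_def st_zero)
next
  case (insert x F)
  then show ?case by (simp only: sum.insert[OF insert(1,2)] st_add)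
qed

definition nrm :: "(nat \<Rightarrow> nat) \<Rightarrow> nat \<Rightarrow> nat" where
  "nrm \<beta> = (\<lambda>i. if i < m then \<beta> i else 0)"

lemma nrm_eq: "nrm f = nrm g \<longleftrightarrow> (\<forall>i<m. f i = g i)"
  unfolding nrm_def fun_eq_iff by (metis (full_types))

lemma nrm_idem: "nrm (nrm f) = nrm f"
  by (simp add: nrm_def fun_eq_iff)

lemma main_n:
  "({z \<in> CC P (polyR m) n. Dg hw P n z = (\<lambda>_. 0)} = Dg hw P (Suc n) ` CC P (polyR m :: 'k::field mpoly set) (Suc n))
   \<longleftrightarrow> (\<forall>\<beta>. {z \<in> CC (Qb \<beta>) (UNIV::'k set) n. Dg (\<lambda>_ _. 1) (Qb \<beta>) n z = (\<lambda>_. 0)}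
            = Dg (\<lambda>_ _. 1) (Qb \<beta>) (Suc n) ` CC (Qb \<beta>) UNIV (Suc n))"
  (is "?H \<longleftrightarrow> (\<forall>\<beta>. ?K \<beta>)")
proof
  assume H: ?H
  show "\<forall>\<beta>. ?K \<beta>"
  proof
    fix \<beta>
    show "?K \<beta>"
    proof (intro equalityI subsetI)
      fix z :: "'a list \<Rightarrow> 'k"
      assume "z \<in> {z \<in> CC (Qb \<beta>) UNIV n. Dg (\<lambda>_ _. 1) (Qb \<beta>) n z = (\<lambda>_. 0)}"
      then have z: "z \<in> CC (Qb \<beta>) UNIV n" "Dg (\<lambda>_ _. 1) (Qb \<beta>) n z = (\<lambda>_. 0)" by auto
      define Z where "Z = lift \<beta> z"
      have Z: "Z \<in> CC P (polyR m) n" unfolding Z_def by (rule lift_CC[OF z(1)])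
      have ZP: "\<forall>\<sigma>. Z \<sigma> \<in> polyR m" using Z by (simp add: CC_def)
      have "Dg hw P n Z = (\<lambda>_. 0)"
      proof (rule chain_eq)
        show "\<forall>\<sigma>. Dg hw P n Z \<sigma> \<in> polyR m" using Dg_polyR[OF ZP] by blast
        show "\<forall>\<sigma>. (0::'k mpoly) \<in> polyR m" by simp
        show "\<forall>\<beta>'. st \<beta>' (Dg hw P n Z) = st \<beta>' (\<lambda>_. 0)"
        proof
          fix \<beta>'
          have "st \<beta>' (Dg hw P n Z) = Dg (\<lambda>_ _. 1) (Qb \<beta>') n (st \<beta>' Z)"
            by (rule DA[OF CC_supp[OF Z]])
          also have "\<dots> = (\<lambda>_. 0)"
          proof (cases "\<forall>i<m. \<beta> i = \<beta>' i")
            case True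
            then show ?thesis unfolding Z_def st_lift[OF CC_Qb_supp[OF z(1)]]
              using z(2) agree[OF True] by simp
          next
            case False
            then show ?thesis unfolding Z_def st_lift[OF CC_Qb_supp[OF z(1)]] if_not_P[OF False]
              by (simp add: Dg_zero)
          qed
          finally show "st \<beta>' (Dg hw P n Z) = st \<beta>' (\<lambda>_. 0)" by (simp add: st_zero)
        qed
      qed
      then have "Z \<in> Dg hw P (Suc n) ` CC P (polyR m) (Suc n)" using H Z by blast
      then obtain W where W: "W \<in> CC P (polyR m) (Suc n)" "Z = Dg hw P (Suc n) W" by blast
      have "st \<beta> W \<in> CC (Qb \<beta>) UNIV (Suc n)" by (rule st_CC[OF W(1)])
      moreover have "Dg (\<lambda>_ _. 1) (Qb \<beta>) (Suc n) (st \<beta> W) = z"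
        using DA[OF CC_supp[OF W(1)], of \<beta>] W(2) st_lift[OF CC_Qb_supp[OF z(1)], of \<beta>]
        by (simp add: Z_def)
      ultimately show "z \<in> Dg (\<lambda>_ _. 1) (Qb \<beta>) (Suc n) ` CC (Qb \<beta>) UNIV (Suc n)" by blast
    next
      fix z :: "'a list \<Rightarrow> 'k"
      assume "z \<in> Dg (\<lambda>_ _. 1) (Qb \<beta>) (Suc n) ` CC (Qb \<beta>) UNIV (Suc n)"
      then obtain w where w: "w \<in> CC (Qb \<beta>) UNIV (Suc n)" "z = Dg (\<lambda>_ _. 1) (Qb \<beta>) (Suc n) w" by blast
      define W where "W = lift \<beta> w"
      have W: "W \<in> CC P (polyR m) (Suc n)" unfolding W_def by (rule lift_CC[OF w(1)])
      define Z where "Z = Dg hw P (Suc n) W"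
      have "Z \<in> {z \<in> CC P (polyR m) n. Dg hw P n z = (\<lambda>_. 0)}" using H W unfolding Z_def by blast
      then have Z: "Z \<in> CC P (polyR m) n" "Dg hw P n Z = (\<lambda>_. 0)" by auto
      have zZ: "z = st \<beta> Z"
        using DA[OF CC_supp[OF W], of \<beta>] w(2) st_lift[OF CC_Qb_supp[OF w(1)], of \<beta>]
        by (simp add: Z_def W_def)
      have "st \<beta> Z \<in> CC (Qb \<beta>) UNIV n" by (rule st_CC[OF Z(1)])
      moreover have "Dg (\<lambda>_ _. 1) (Qb \<beta>) n (st \<beta> Z) = (\<lambda>_. 0)"
        using DA[OF CC_supp[OF Z(1)], of \<beta>] Z(2) by (simp add: st_zero)
      ultimately show "z \<in> {z \<in> CC (Qb \<beta>) UNIV n. Dg (\<lambda>_ _. 1) (Qb \<beta>) n z = (\<lambda>_. 0)}"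
        using zZ by simp
    qed
  qed
next
  assume K: "\<forall>\<beta>. ?K \<beta>"
  show ?H
  proof (intro equalityI subsetI)
    fix Z :: "'a list \<Rightarrow> 'k mpoly"
    assume "Z \<in> {z \<in> CC P (polyR m) n. Dg hw P n z = (\<lambda>_. 0)}"
    then have Z: "Z \<in> CC P (polyR m) n" "Dg hw P n Z = (\<lambda>_. 0)" by auto
    have ZP: "\<forall>\<sigma>. Z \<sigma> \<in> polyR m" using Z by (simp add: CC_def)
    have "\<exists>w. w \<in> CC (Qb \<beta>) UNIV (Suc n) \<and> Dg (\<lambda>_ _. 1) (Qb \<beta>) (Suc n) w = st \<beta> Z" for \<beta>
    proof -
      have "st \<beta> Z \<in> CC (Qb \<beta>) UNIV n" by (rule st_CC[OF Z(1)])
      moreover have "Dg (\<lambda>_ _. 1) (Qb \<beta>) n (st \<beta> Z) = (\<lambda>_. 0)"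
        using DA[OF CC_supp[OF Z(1)], of \<beta>] Z(2) by (simp add: st_zero)
      ultimately have "st \<beta> Z \<in> Dg (\<lambda>_ _. 1) (Qb \<beta>) (Suc n) ` CC (Qb \<beta>) UNIV (Suc n)"
        using K by blast
      then show ?thesis by force
    qed
    then obtain wf where wf: "\<And>\<beta>. wf \<beta> \<in> CC (Qb \<beta>) UNIV (Suc n)"
        "\<And>\<beta>. Dg (\<lambda>_ _. 1) (Qb \<beta>) (Suc n) (wf \<beta>) = st \<beta> Z"
      by metis
    define B where "B = (\<lambda>(\<sigma>, \<kappa>). nrm (\<lambda>i. hdeg \<sigma> i + lk \<kappa> i)) ` (SIGMA \<sigma>:cells P n. Poly_Mapping.keys (Z \<sigma>))"
    have finB: "finite B" unfolding B_def
      by (intro finite_imageI finite_SigmaI finite_cells finP) simp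
    have Bn: "\<forall>\<beta>\<in>B. nrm \<beta> = \<beta>" unfolding B_def using nrm_idem by auto
    have nB: "nrm \<beta> \<in> B" if ne: "st \<beta> Z \<noteq> (\<lambda>_. 0)" for \<beta>
    proof -
      obtain \<sigma> where s: "st \<beta> Z \<sigma> \<noteq> 0" using ne by (auto simp: fun_eq_iff)
      then have le: "leq m (hdeg \<sigma>) \<beta>" by (auto simp: st_def split: if_splits)
      define \<kappa> where "\<kappa> = EE m (\<lambda>i. \<beta> i - hdeg \<sigma> i)"
      have k: "\<kappa> \<in> Poly_Mapping.keys (Z \<sigma>)" using s le by (simp add: st_def \<kappa>_def in_keys_iff)
      then have "Z \<sigma> \<noteq> 0" by auto
      then have "\<sigma> \<in> cells P n" using CC_supp[OF Z(1)] by blast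
      moreover have "nrm (\<lambda>i. hdeg \<sigma> i + lk \<kappa> i) = nrm \<beta>"
        using le by (auto simp: nrm_def \<kappa>_def lookup_EE leq_def fun_eq_iff)
      ultimately show ?thesis unfolding B_def using k by (intro rev_image_eqI[of "(\<sigma>, \<kappa>)"]) auto
    qed
    define W where "W = (\<Sum>\<beta>\<in>B. lift \<beta> (wf \<beta>))"
    have W: "W \<in> CC P (polyR m) (Suc n)" unfolding W_def
      using finB lift_CC[OF wf(1)] by (intro CC_sum) auto
    have WP: "\<forall>\<sigma>. W \<sigma> \<in> polyR m" using W by (simp add: CC_def)
    have "Z = Dg hw P (Suc n) W"
    proof (rule chain_eq[OF ZP Dg_polyR[OF WP]], rule allI)
      fix \<beta>'
      have ag: "\<forall>i<m. nrm \<beta>' i = \<beta>' i" by (simp add: nrm_def)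
      have "st \<beta>' W = (\<Sum>\<beta>\<in>B. st \<beta>' (lift \<beta> (wf \<beta>)))" unfolding W_def by (rule st_sum)
      also have "\<dots> = (\<Sum>\<beta>\<in>B. if \<beta> = nrm \<beta>' then wf \<beta> else (\<lambda>_. 0))"
      proof (rule sum.cong[OF refl])
        fix \<beta> assume "\<beta> \<in> B"
        then have "(\<forall>i<m. \<beta> i = \<beta>' i) \<longleftrightarrow> \<beta> = nrm \<beta>'"
          using Bn nrm_eq[of \<beta> \<beta>'] by simp
        moreover have "st \<beta>' (lift \<beta> (wf \<beta>)) = (if (\<forall>i<m. \<beta> i = \<beta>' i) then wf \<beta> else (\<lambda>_. 0))"
          by (rule st_lift[OF CC_Qb_supp[OF wf(1)]])
        ultimately show "st \<beta>' (lift \<beta> (wf \<beta>)) = (if \<beta> = nrm \<beta>' then wf \<beta> else (\<lambda>_. 0))"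
          by simp
      qed
      also have "\<dots> = (if nrm \<beta>' \<in> B then wf (nrm \<beta>') else (\<lambda>_. 0))"
      proof -
        have "(\<Sum>\<beta>\<in>B. if \<beta> = nrm \<beta>' then wf \<beta> else 0) = (if nrm \<beta>' \<in> B then wf (nrm \<beta>') else 0)"
          by (rule sum.delta[OF finB])
        then show ?thesis unfolding zero_fun_def[symmetric] by simp
      qed
      finally have stW: "st \<beta>' W = \<dots>" .
      have "st \<beta>' (Dg hw P (Suc n) W) = Dg (\<lambda>_ _. 1) (Qb \<beta>') (Suc n) (st \<beta>' W)"
        by (rule DA[OF CC_supp[OF W]])
      also have "\<dots> = st \<beta>' Z"
      proof (cases "nrm \<beta>' \<in> B")
        case True
        have e: "st (nrm \<beta>') Z = st \<beta>' Z" by (rule fun_cong[OF agree(1)[OF ag]])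
        then show ?thesis using True stW wf(2)[of "nrm \<beta>'"] agree(2)[OF ag] by simp
      next
        case False
        then have "st (nrm \<beta>') Z = (\<lambda>_. 0)" using nB[of "nrm \<beta>'"] nrm_idem[of \<beta>']
          by auto
        moreover have e: "st (nrm \<beta>') Z = st \<beta>' Z" by (rule fun_cong[OF agree(1)[OF ag]])
        ultimately show ?thesis using stW False by (simp add: Dg_zero)
      qed
      finally show "st \<beta>' Z = st \<beta>' (Dg hw P (Suc n) W)" by simp
    qed
    then show "Z \<in> Dg hw P (Suc n) ` CC P (polyR m) (Suc n)" using W by blast
  next
    fix Z :: "'a list \<Rightarrow> 'k mpoly"
    assume "Z \<in> Dg hw P (Suc n) ` CC P (polyR m) (Suc n)"
    then obtain W where W: "W \<in> CC P (polyR m) (Suc n)" "Z = Dg hw P (Suc n) W" by blast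
    have WP: "\<forall>\<sigma>. W \<sigma> \<in> polyR m" using W by (simp add: CC_def)
    have ZP: "\<forall>\<sigma>. Z \<sigma> \<in> polyR m" using Dg_polyR[OF WP] W(2) by simp
    have Zsupp: "\<forall>\<sigma>. Z \<sigma> \<noteq> 0 \<longrightarrow> \<sigma> \<in> cells P n"
      using W(2) by (simp add: Dg_def tgt_def)
    have kk: "st \<beta> Z \<in> CC (Qb \<beta>) UNIV n \<and> Dg (\<lambda>_ _. 1) (Qb \<beta>) n (st \<beta> Z) = (\<lambda>_. 0)" for \<beta>
    proof -
      have "st \<beta> Z = Dg (\<lambda>_ _. 1) (Qb \<beta>) (Suc n) (st \<beta> W)"
        using DA[OF CC_supp[OF W(1)], of \<beta>] W(2) by simp
      moreover have "st \<beta> W \<in> CC (Qb \<beta>) UNIV (Suc n)" by (rule st_CC[OF W(1)])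
      ultimately have "st \<beta> Z \<in> Dg (\<lambda>_ _. 1) (Qb \<beta>) (Suc n) ` CC (Qb \<beta>) UNIV (Suc n)" by blast
      then show ?thesis using K by blast
    qed
    have ZCC: "Z \<in> CC P (polyR m) n"
      unfolding CC_def mem_Collect_eq
    proof (intro conjI allI impI)
      show "\<And>\<sigma>. Z \<sigma> \<noteq> 0 \<Longrightarrow> \<sigma> \<in> cells P n" using Zsupp by blast
      show "\<And>\<sigma>. Z \<sigma> \<in> polyR m" using ZP by blast
      fix \<tau> assume t: "\<tau> \<in> ochains P \<and> length \<tau> = n \<and> dd P (hd \<tau>) = n"
      have bP: "bdryw (\<lambda>_ _. 1) (cells P n) Z \<tau> \<in> polyR m"
        using polyR_bdryw[of "\<lambda>_ _. 1" \<tau> m Z] ZP polyR_one by blast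
      show "bdryw (\<lambda>_ _. 1) (cells P n) Z \<tau> = 0"
      proof (rule poly_mapping_eqI)
        fix \<mu>
        show "lk (bdryw (\<lambda>_ _. 1) (cells P n) Z \<tau>) \<mu> = lk 0 \<mu>"
        proof (cases "Poly_Mapping.keys \<mu> \<subseteq> {..<m}")
          case True
          define \<beta> where "\<beta> i = deg (hd \<tau>) i + lk \<mu> i" for i
          have le: "leq m (deg (hd \<tau>)) \<beta>" by (simp add: leq_def \<beta>_def)
          have e: "EE m (\<lambda>i. \<beta> i - deg (hd \<tau>) i) = \<mu>" using EE_lookup[OF True] by (simp add: \<beta>_def)
          have "lk (bdryw (\<lambda>_ _. 1) (cells P n) Z \<tau>) \<mu> = bdryw (\<lambda>_ _. 1) (cells (Qb \<beta>) n) (st \<beta> Z) \<tau>"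
            using RC[OF Zsupp _ _ le] t e by simp
          also have "\<dots> = 0"
          proof -
            have "hd \<tau> \<in> Qb \<beta>" using t ochains_hd_in le by (auto simp: Qb_def)
            then have "\<tau> \<in> ochains (Qb \<beta>)" "dd (Qb \<beta>) (hd \<tau>) = n"
              using t ochains_down[OF Qb_down] dd_down[OF Qb_down] by auto
            then show ?thesis using kk[of \<beta>] t by (simp add: CC_def)
          qed
          finally show ?thesis by simp
        next
          case False
          have "lk (bdryw (\<lambda>_ _. 1) (cells P n) Z \<tau>) \<mu> = 0" using bP False unfolding polyR_iff by blast
          then show ?thesis by simp
        qed
      qed
    qed
    have "Dg hw P n Z = (\<lambda>_. 0)"
    proof (rule chain_eq)
      show "\<forall>\<sigma>. Dg hw P n Z \<sigma> \<in> polyR m" using Dg_polyR[OF ZP] by blast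
      show "\<forall>\<sigma>. (0::'k mpoly) \<in> polyR m" by simp
      show "\<forall>\<beta>. st \<beta> (Dg hw P n Z) = st \<beta> (\<lambda>_. 0)"
        using DA[OF Zsupp] kk by (simp add: st_zero)
    qed
    with ZCC show "Z \<in> {z \<in> CC P (polyR m) n. Dg hw P n z = (\<lambda>_. 0)}" by simp
  qed
qed


lemma diffw_hw: "n \<ge> 1 \<Longrightarrow> diffw (hweight m deg) P n = (Dg hw P n :: ('a list \<Rightarrow> 'k::field mpoly) \<Rightarrow> _)"
proof (intro ext)
  fix c :: "'a list \<Rightarrow> 'k mpoly" and \<tau>
  assume n: "n \<ge> 1"
  show "diffw (hweight m deg) P n c \<tau> = Dg hw P n c \<tau>"
  proof (cases "\<tau> \<in> cells P (n - 1)")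
    case True
    then have ne: "\<tau> \<noteq> []" by (simp add: cells_def ochains_def)
    have "bdryw (hweight m deg) (cells P n) c \<tau> = bdryw hw (cells P n) c \<tau>"
    proof (rule bdryw_cong, intro ballI allI impI conjI refl)
      fix \<sigma> i assume "\<sigma> \<in> cells P n"
      then have "\<sigma> \<noteq> []" by (simp add: cells_def ochains_def)
      then show "hweight m deg \<sigma> \<tau> = hw \<sigma> \<tau>" using ne by (simp add: hweight_def hw_def hdeg_def)
    qed
    then show ?thesis using True n by (simp add: diffw_def Dg_def tgt_def)
  next
    case False then show ?thesis using n by (simp add: diffw_def Dg_def tgt_def)
  qed
qed

lemma haug_Dg: "haug m P deg z = 0 \<longleftrightarrow> Dg hw P 0 (z :: 'a list \<Rightarrow> 'k::field mpoly) = (\<lambda>_. 0)"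
proof -
  have "bdryw hw (cells P 0) z [] = haug m P deg z"
    unfolding bdryw_def haug_def
  proof (rule sum.cong[OF refl])
    fix \<sigma> assume "\<sigma> \<in> cells P 0"
    then obtain a where a: "\<sigma> = [a]" by (auto simp: cells_def ochains_def length_Suc_conv)
    show "(\<Sum>i<length \<sigma>. if remove_nth i \<sigma> = [] then (- 1) ^ i * hw \<sigma> [] * z \<sigma> else 0) =
        z \<sigma> * xmono m (deg (hd \<sigma>))"
      using a by (simp add: remove_nth_def hw_def hdeg_def mult.commute)
  qed
  then show ?thesis by (auto simp: Dg_def tgt_def fun_eq_iff)
qed

end

lemma diffw_one: "n \<ge> 1 \<Longrightarrow> diffw (\<lambda>_ _. 1) S n = Dg (\<lambda>_ _. 1) S n"
  by (intro ext) (simp add: diffw_def Dg_def tgt_def)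

lemma sum_Dg: "(\<Sum>\<sigma>\<in>cells S 0. z \<sigma>) = 0 \<longleftrightarrow> Dg (\<lambda>_ _. 1) S 0 (z :: _ \<Rightarrow> 'r::comm_ring_1) = (\<lambda>_. 0)"
proof -
  have "bdryw (\<lambda>_ _. 1) (cells S 0) z [] = (\<Sum>\<sigma>\<in>cells S 0. z \<sigma>)"
    unfolding bdryw_def
  proof (rule sum.cong[OF refl])
    fix \<sigma> assume "\<sigma> \<in> cells S 0"
    then obtain a where a: "\<sigma> = [a]" by (auto simp: cells_def ochains_def length_Suc_conv)
    show "(\<Sum>i<length \<sigma>. if remove_nth i \<sigma> = [] then (- 1) ^ i * 1 * z \<sigma> else 0) = z \<sigma>"
      using a by (simp add: remove_nth_def)
  qed
  then show ?thesis by (auto simp: Dg_def tgt_def fun_eq_iff)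
qed

lemma dd0:
  assumes "finite S" "a \<in> S"
  shows "dd S a = 0 \<longleftrightarrow> a \<in> minimals S"
proof -
  define L where "L = length ` ochains {x \<in> S. x \<le> a}"
  have fin: "finite L" unfolding L_def by (intro finite_imageI finite_ochains) (use assms in auto)
  have "[a] \<in> ochains {x \<in> S. x \<le> a}" using assms by (simp add: ochains_def)
  then have ne: "L \<noteq> {}" and one: "1 \<in> L" unfolding L_def by (auto intro: rev_image_eqI)
  show ?thesis
  proof
    assume d: "dd S a = 0"
    show "a \<in> minimals S" unfolding minimals_def
    proof (intro CollectI conjI ballI notI assms(2))
      fix x assume "x \<in> S" "x < a"
      then have "[a, x] \<in> ochains {x \<in> S. x \<le> a}" using assms by (auto simp: ochains_def)
      then have "2 \<in> L" unfolding L_def by (auto intro: rev_image_eqI)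
      then have "Max L \<ge> 2" using Max_ge[OF fin] by blast
      then show False using d by (simp add: dd_def L_def[symmetric])
    qed
  next
    assume mn: "a \<in> minimals S"
    have "\<forall>l\<in>L. l \<le> 1"
    proof
      fix l assume "l \<in> L"
      then obtain xs where xs: "xs \<in> ochains {x \<in> S. x \<le> a}" "l = length xs" by (auto simp: L_def)
      show "l \<le> 1"
      proof (rule ccontr)
        assume "\<not> l \<le> 1"
        then obtain h h' t where "xs = h # h' # t" using xs(2) by (cases xs; cases "tl xs") auto
        then have "h' < h" "h \<le> a" "h' \<in> S" using xs(1) by (auto simp: ochains_def)
        then have "h' < a" by simp
        then show False using mn \<open>h' \<in> S\<close> by (auto simp: minimals_def)
      qed
    qed
    then have "Max L \<le> 1" using fin ne by simp
    then show "dd S a = 0" by (simp add: dd_def L_def[symmetric])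
  qed
qed

lemma cells0: "finite S \<Longrightarrow> cells S 0 = (\<lambda>a. [a]) ` minimals S"
proof -
  assume f: "finite S"
  have "\<sigma> \<in> cells S 0 \<longleftrightarrow> (\<exists>a. \<sigma> = [a] \<and> a \<in> minimals S)" for \<sigma>
  proof
    assume "\<sigma> \<in> cells S 0"
    then obtain a where "\<sigma> = [a]" "a \<in> S" "dd S a = 0" by (auto simp: cells_def ochains_def length_Suc_conv)
    then show "\<exists>a. \<sigma> = [a] \<and> a \<in> minimals S" using dd0[OF f] by blast
  next
    assume "\<exists>a. \<sigma> = [a] \<and> a \<in> minimals S"
    then obtain a where "\<sigma> = [a]" "a \<in> minimals S" by blast
    moreover then have "a \<in> S" by (simp add: minimals_def)
    ultimately show "\<sigma> \<in> cells S 0" using dd0[OF f] by (simp add: cells_def ochains_def)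
  qed
  then show ?thesis by blast
qed

lemma haug_min:
  assumes "finite P"
  shows "haug m P deg z = (\<Sum>a\<in>minimals P. z [a] * xmono m (deg a))"
  unfolding haug_def cells0[OF assms] by (subst sum.reindex) (auto simp: inj_on_def)

lemma haug_surj:
  assumes "finite P"
  shows "haug m P deg ` CC P (polyR m :: 'k::field mpoly set) 0 = mon_ideal m P deg"
proof -
  note re = haug_min[OF assms]
  show ?thesis
  proof (intro equalityI subsetI)
    fix p assume "p \<in> haug m P deg ` CC P (polyR m) 0"
    then obtain z where z: "z \<in> CC P (polyR m) 0" "p = haug m P deg z" by blast
    have "\<forall>a. (\<lambda>a. z [a]) a \<in> polyR m" using z(1) by (simp add: CC_def)
    moreover have "p = (\<Sum>a\<in>minimals P. (\<lambda>a. z [a]) a * xmono m (deg a))" using z(2) re by simp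
    ultimately show "p \<in> mon_ideal m P deg" unfolding mon_ideal_def mem_Collect_eq
      by (intro exI[of _ "\<lambda>a. z [a]"]) simp
  next
    fix p assume "p \<in> mon_ideal m P deg"
    then obtain r where r: "\<forall>a. r a \<in> polyR m" "p = (\<Sum>a\<in>minimals P. r a * xmono m (deg a))"
      by (auto simp: mon_ideal_def)
    define z where "z \<sigma> = (if \<sigma> \<in> cells P 0 then r (hd \<sigma>) else 0)" for \<sigma>
    have "z \<in> CC P (polyR m) 0" unfolding CC_def using r(1) by (auto simp: z_def ochains_def)
    moreover have "haug m P deg z = p" unfolding re r(2) cells0[OF assms] z_def by auto
    ultimately show "p \<in> haug m P deg ` CC P (polyR m) 0" by blast
  qed
qed

lemma sum_surj:
  assumes "finite S" "S \<noteq> {}"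
  shows "(\<lambda>z. \<Sum>\<sigma>\<in>cells S 0. z \<sigma>) ` CC S (UNIV::'k::field set) 0 = UNIV"
proof -
  obtain a where a: "a \<in> S" "\<forall>x\<in>S. x \<le> a \<longrightarrow> a = x" using finite_has_minimal[OF assms] by blast
  then have am: "a \<in> minimals S" unfolding minimals_def using less_le by auto
  then have ac: "[a] \<in> cells S 0" using cells0[OF assms(1)] by blast
  show ?thesis
  proof (intro equalityI subsetI UNIV_I)
    fix c :: 'k
    define z where "z \<sigma> = (if \<sigma> = [a] then c else 0)" for \<sigma>
    have "z \<in> CC S UNIV 0" unfolding CC_def using ac by (auto simp: z_def ochains_def)
    moreover have "(\<Sum>\<sigma>\<in>cells S 0. z \<sigma>) = c" unfolding z_def using ac finite_cells[OF assms(1)]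
      by (simp add: sum.delta')
    ultimately show "c \<in> (\<lambda>z. \<Sum>\<sigma>\<in>cells S 0. z \<sigma>) ` CC S UNIV 0" by force
  qed
qed

lemma empty_exact:
  "{z \<in> CC {} (UNIV::'k::field set) n. Dg (\<lambda>_ _. 1) ({}::'a::order set) n z = (\<lambda>_. 0)}
     = Dg (\<lambda>_ _. 1) {} (Suc n) ` CC {} UNIV (Suc n)"
proof -
  have "CC ({}::'a set) (UNIV::'k set) k = {\<lambda>_. 0}" for k
  proof -
    have c: "cells ({}::'a set) k = {}" by (auto simp: cells_def ochains_def)
    show ?thesis unfolding CC_def c by (auto simp: fun_eq_iff bdryw_zero)
  qed
  then show ?thesis by (auto simp: Dg_zero)
qed

lemma all_split: "(\<forall>n. Q n) \<longleftrightarrow> Q 0 \<and> (\<forall>n\<ge>1. Q (n::nat))"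
proof
  assume "\<forall>n. Q n" then show "Q 0 \<and> (\<forall>n\<ge>1. Q n)" by simp
next
  assume a: "Q 0 \<and> (\<forall>n\<ge>1. Q n)"
  show "\<forall>n. Q n"
  proof
    fix n show "Q n" using a by (cases n) auto
  qed
qed

lemma reorder3: "(A \<and> B \<and> (x = x)) \<longleftrightarrow> (B \<and> A)" by blast

lemma ball_iff: "\<forall>n\<ge>(1::nat). (A n \<longleftrightarrow> B n) \<Longrightarrow> (C \<and> (\<forall>n\<ge>1. A n)) \<longleftrightarrow> (C \<and> (\<forall>n\<ge>1. B n))"
  by auto

lemma ace_iff:
  assumes "finite S" "S \<noteq> {}"
  shows "aug_conic_exact S TYPE('k::field) \<longleftrightarrow>
    (\<forall>n. {z \<in> CC S (UNIV::'k set) n. Dg (\<lambda>_ _. 1) S n z = (\<lambda>_. 0)}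
            = Dg (\<lambda>_ _. 1) S (Suc n) ` CC S UNIV (Suc n))" (is "?A \<longleftrightarrow> (\<forall>n. ?E n)")
proof -
  have e0: "{z \<in> CC S (UNIV::'k set) 0. (\<Sum>\<sigma>\<in>cells S 0. z \<sigma>) = 0} = {z \<in> CC S UNIV 0. Dg (\<lambda>_ _. 1) S 0 z = (\<lambda>_. 0)}"
    using sum_Dg by blast
  have en: "\<forall>n\<ge>1. ({z \<in> CC S (UNIV::'k set) n. diffw (\<lambda>_ _. 1) S n z = (\<lambda>_. 0)}
            = diffw (\<lambda>_ _. 1) S (Suc n) ` CC S UNIV (Suc n) \<longleftrightarrow> ?E n)"
  proof (intro allI impI)
    fix n :: nat assume n: "n \<ge> 1"
    show "({z \<in> CC S (UNIV::'k set) n. diffw (\<lambda>_ _. 1) S n z = (\<lambda>_. 0)}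
            = diffw (\<lambda>_ _. 1) S (Suc n) ` CC S UNIV (Suc n) \<longleftrightarrow> ?E n)"
    proof -
      have b: "diffw (\<lambda>_ _. 1) S (Suc n) = Dg (\<lambda>_ _. 1) S (Suc n)" by (rule diffw_one) simp
      show ?thesis unfolding diffw_one[OF n] b by (rule refl)
    qed
  qed
  have d1: "diffw (\<lambda>_ _. 1) S 1 = Dg (\<lambda>_ _. 1) S 1" by (rule diffw_one) simp
  have "?A \<longleftrightarrow> ?E 0 \<and> (\<forall>n\<ge>1. {z \<in> CC S (UNIV::'k set) n. diffw (\<lambda>_ _. 1) S n z = (\<lambda>_. 0)}
            = diffw (\<lambda>_ _. 1) S (Suc n) ` CC S UNIV (Suc n))"
    unfolding aug_conic_exact_def e0 d1 sum_surj[OF assms] unfolding One_nat_def by (rule reorder3)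
  also have "\<dots> \<longleftrightarrow> ?E 0 \<and> (\<forall>n\<ge>1. ?E n)" by (rule ball_iff[OF en])
  also have "\<dots> \<longleftrightarrow> (\<forall>n. ?E n)" by (rule all_split[symmetric])
  finally show ?thesis .
qed

context S3 begin

lemma homog_iff:
  "homog_resolution m P deg TYPE('k::field) \<longleftrightarrow>
    (\<forall>n. {z \<in> CC P (polyR m) n. Dg hw P n z = (\<lambda>_. 0)} = Dg hw P (Suc n) ` CC P (polyR m :: 'k mpoly set) (Suc n))"
    (is "?A \<longleftrightarrow> (\<forall>n. ?E n)")
proof -
  have e0: "{z \<in> CC P (polyR m :: 'k mpoly set) 0. haug m P deg z = 0} = {z \<in> CC P (polyR m) 0. Dg hw P 0 z = (\<lambda>_. 0)}"
    using haug_Dg by blast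
  have d1: "diffw (hweight m deg) P 1 = (Dg hw P 1 :: ('a list \<Rightarrow> 'k mpoly) \<Rightarrow> _)" by (rule diffw_hw) simp
  have en: "\<forall>n\<ge>1. ({z \<in> CC P (polyR m :: 'k mpoly set) n. diffw (hweight m deg) P n z = (\<lambda>_. 0)}
            = diffw (hweight m deg) P (Suc n) ` CC P (polyR m) (Suc n) \<longleftrightarrow> ?E n)"
  proof (intro allI impI)
    fix n :: nat assume n: "n \<ge> 1"
    have a: "diffw (hweight m deg) P n = (Dg hw P n :: ('a list \<Rightarrow> 'k mpoly) \<Rightarrow> _)" by (rule diffw_hw[OF n])
    have b: "diffw (hweight m deg) P (Suc n) = (Dg hw P (Suc n) :: ('a list \<Rightarrow> 'k mpoly) \<Rightarrow> _)" by (rule diffw_hw) simp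
    show "({z \<in> CC P (polyR m :: 'k mpoly set) n. diffw (hweight m deg) P n z = (\<lambda>_. 0)}
            = diffw (hweight m deg) P (Suc n) ` CC P (polyR m) (Suc n) \<longleftrightarrow> ?E n)"
      unfolding a b by (rule refl)
  qed
  have "?A \<longleftrightarrow> ?E 0 \<and> (\<forall>n\<ge>1. {z \<in> CC P (polyR m :: 'k mpoly set) n. diffw (hweight m deg) P n z = (\<lambda>_. 0)}
            = diffw (hweight m deg) P (Suc n) ` CC P (polyR m) (Suc n))"
    unfolding homog_resolution_def e0 d1 haug_surj[OF finP] unfolding One_nat_def by (rule reorder3)
  also have "\<dots> \<longleftrightarrow> ?E 0 \<and> (\<forall>n\<ge>1. ?E n)" by (rule ball_iff[OF en])
  also have "\<dots> \<longleftrightarrow> (\<forall>n. ?E n)" by (rule all_split[symmetric])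
  finally show ?thesis .
qed

end

theorem mainTheorem3:
  fixes P :: "'a::order set" and deg :: "'a \<Rightarrow> nat \<Rightarrow> nat" and m :: nat
  assumes "finite P"
    and "\<forall>a\<in>P. \<forall>b\<in>P. a \<le> b \<longrightarrow> (\<forall>i<m. deg a i \<le> deg b i)"
  shows "homog_resolution m P deg TYPE('k::field) \<longleftrightarrow>
    (\<forall>\<alpha> :: nat \<Rightarrow> int.
       {x \<in> P. \<forall>i<m. int (deg x i) \<le> \<alpha> i} \<noteq> {} \<longrightarrow>
       aug_conic_exact {x \<in> P. \<forall>i<m. int (deg x i) \<le> \<alpha> i} TYPE('k))"
proof -
  interpret S3 P m deg using assms by unfold_locales
  have "homog_resolution m P deg TYPE('k) \<longleftrightarrow>
      (\<forall>\<beta> n. {z \<in> CC (Qb \<beta>) (UNIV::'k set) n. Dg (\<lambda>_ _. 1) (Qb \<beta>) n z = (\<lambda>_. 0)}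
            = Dg (\<lambda>_ _. 1) (Qb \<beta>) (Suc n) ` CC (Qb \<beta>) UNIV (Suc n))"
  proof -
    have "homog_resolution m P deg TYPE('k) \<longleftrightarrow>
      (\<forall>n. {z \<in> CC P (polyR m) n. Dg hw P n z = (\<lambda>_. 0)} = Dg hw P (Suc n) ` CC P (polyR m :: 'k mpoly set) (Suc n))"
      by (rule homog_iff)
    also have "\<dots> \<longleftrightarrow> (\<forall>n \<beta>. {z \<in> CC (Qb \<beta>) (UNIV::'k set) n. Dg (\<lambda>_ _. 1) (Qb \<beta>) n z = (\<lambda>_. 0)}
            = Dg (\<lambda>_ _. 1) (Qb \<beta>) (Suc n) ` CC (Qb \<beta>) UNIV (Suc n))"
      by (simp only: main_n)
    also have "\<dots> \<longleftrightarrow> (\<forall>\<beta> n. {z \<in> CC (Qb \<beta>) (UNIV::'k set) n. Dg (\<lambda>_ _. 1) (Qb \<beta>) n z = (\<lambda>_. 0)}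
            = Dg (\<lambda>_ _. 1) (Qb \<beta>) (Suc n) ` CC (Qb \<beta>) UNIV (Suc n))"
      by (rule all_comm)
    finally show ?thesis .
  qed
  also have "\<dots> \<longleftrightarrow> (\<forall>\<alpha> :: nat \<Rightarrow> int.
       {x \<in> P. \<forall>i<m. int (deg x i) \<le> \<alpha> i} \<noteq> {} \<longrightarrow>
       aug_conic_exact {x \<in> P. \<forall>i<m. int (deg x i) \<le> \<alpha> i} TYPE('k))"
  proof
    assume K: "\<forall>\<beta> n. {z \<in> CC (Qb \<beta>) (UNIV::'k set) n. Dg (\<lambda>_ _. 1) (Qb \<beta>) n z = (\<lambda>_. 0)}
            = Dg (\<lambda>_ _. 1) (Qb \<beta>) (Suc n) ` CC (Qb \<beta>) UNIV (Suc n)"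
    show "\<forall>\<alpha> :: nat \<Rightarrow> int.
       {x \<in> P. \<forall>i<m. int (deg x i) \<le> \<alpha> i} \<noteq> {} \<longrightarrow>
       aug_conic_exact {x \<in> P. \<forall>i<m. int (deg x i) \<le> \<alpha> i} TYPE('k)"
    proof (intro allI impI)
      fix \<alpha> :: "nat \<Rightarrow> int"
      assume ne: "{x \<in> P. \<forall>i<m. int (deg x i) \<le> \<alpha> i} \<noteq> {}"
      then obtain y where y: "y \<in> P" "\<forall>i<m. int (deg y i) \<le> \<alpha> i" by blast
      define \<beta> where "\<beta> i = nat (\<alpha> i)" for i
      have eq: "{x \<in> P. \<forall>i<m. int (deg x i) \<le> \<alpha> i} = Qb \<beta>"
      proof -
        have "int (deg x i) \<le> \<alpha> i \<longleftrightarrow> deg x i \<le> \<beta> i" if "i < m" for x i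
        proof -
          have "\<alpha> i \<ge> 0" using y(2) that by force
          then show ?thesis by (simp add: \<beta>_def) linarith
        qed
        then show ?thesis by (auto simp: Qb_def leq_def)
      qed
      have fq: "finite (Qb \<beta>)" using finP by (simp add: Qb_def)
      have qne: "Qb \<beta> \<noteq> {}" using ne eq by simp
      have "\<forall>n. {z \<in> CC (Qb \<beta>) (UNIV::'k set) n. Dg (\<lambda>_ _. 1) (Qb \<beta>) n z = (\<lambda>_. 0)}
            = Dg (\<lambda>_ _. 1) (Qb \<beta>) (Suc n) ` CC (Qb \<beta>) UNIV (Suc n)"
        using K by (rule spec)
      then show "aug_conic_exact {x \<in> P. \<forall>i<m. int (deg x i) \<le> \<alpha> i} TYPE('k)"
        unfolding eq by (rule iffD2[OF ace_iff[OF fq qne]])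
    qed
  next
    assume A: "\<forall>\<alpha> :: nat \<Rightarrow> int.
       {x \<in> P. \<forall>i<m. int (deg x i) \<le> \<alpha> i} \<noteq> {} \<longrightarrow>
       aug_conic_exact {x \<in> P. \<forall>i<m. int (deg x i) \<le> \<alpha> i} TYPE('k)"
    show "\<forall>\<beta> n. {z \<in> CC (Qb \<beta>) (UNIV::'k set) n. Dg (\<lambda>_ _. 1) (Qb \<beta>) n z = (\<lambda>_. 0)}
            = Dg (\<lambda>_ _. 1) (Qb \<beta>) (Suc n) ` CC (Qb \<beta>) UNIV (Suc n)"
    proof (intro allI)
      fix \<beta> n
      show "{z \<in> CC (Qb \<beta>) (UNIV::'k set) n. Dg (\<lambda>_ _. 1) (Qb \<beta>) n z = (\<lambda>_. 0)}
            = Dg (\<lambda>_ _. 1) (Qb \<beta>) (Suc n) ` CC (Qb \<beta>) UNIV (Suc n)"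
      proof (cases "Qb \<beta> = {}")
        case True then show ?thesis using empty_exact by simp
      next
        case False
        have q: "{x \<in> P. \<forall>i<m. int (deg x i) \<le> int (\<beta> i)} = Qb \<beta>" by (simp add: Qb_def leq_def)
        have fq: "finite (Qb \<beta>)" using finP by (simp add: Qb_def)
        have ac: "aug_conic_exact (Qb \<beta>) TYPE('k)"
          using A[rule_format, of "\<lambda>i. int (\<beta> i)"] False unfolding q by blast
        from iffD1[OF ace_iff[OF fq False] ac] show ?thesis by (rule spec)
      qed
    qed
  qed
  finally show ?thesis .
qed

end
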